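(* Let $(S,T)$ be an ideally triangulated surface with $\chi(S)<0$, with edge set $E$ and triangle set $F$. Let $l^{(m)}\in\mathbb{R}^E$ ($m\ge 0$) be a sequence such that $\widetilde\Psi(l^{(m)})\to z$ as $m\to\infty$ for some $z\in P(T)$. Then for every corner of every triangle in $F$, the corresponding generalized angles $\theta^{(m)}$ in the metrics $l^{(m)}$ form a bounded sequence; in particular, if $\lim_{m\to\infty}\theta^{(m)}$ exists in $[0,\infty]$, it lies in $[0,\infty)$.
   Context: For $l\in\mathbb{R}^E$, realize each triangle of $T$ as a decorated ideal hyperbolic triangle (ideal triangle with a horodisk at each vertex) whose generalized edge lengths are given by $l$; here the generalized angle at a vertex is twice the length of the horocyclic arc inside the triangle, and the generalized length of an edge is the distance between the horodisks at its ends if they are disjoint and minus the distance between the points where the two horocycles meet the edge otherwise. (The lengths determine the angles via $\frac{e^{l_i}}{2}=\frac{2}{\theta_j\theta_k}$, with $\theta_i$ the angle opposite the edge of length $l_i$.) In a triangle with angles $\theta_i,\theta_j,\theta_k$, the radius invariant at the edge opposite $\theta_i$ is $\frac12(\theta_j+\theta_k-\theta_i)$. Define $\widetilde\Psi(l)(e)=r_f(e)+r_{f'}(e)$, where $f,f'$ are the two triangles adjacent to $e$ and $r_f(e),r_{f'}(e)$ are the radius invariants at $e$ in them. An edge cycle is a sequence $(e_1,t_1,\dots,e_k,t_k)$ of edges and triangles such that, with $e_{k+1}=e_1$, $e_i$ and $e_{i+1}$ are two distinct edges of $t_i$ for each $i$. $P(T)=\{z\in\mathbb{R}^E:\sum_{i=1}^k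 z(e_i)>0$ for every edge cycle $(e_1,t_1,\dots,e_k,t_k)\}$. *)

theory Defs
  imports "HOL-Analysis.Analysis"
begin

text \<open>Combinatorial model of an ideally triangulated (oriented) surface via sides
 (half-tri_edges). H is the finite set of sides of triangles; nxt cyclically permutes the
 three sides of each triangle; glue is the gluing involution pairing sides into tri_edges.\<close>

definition ideal_triangulation :: "'h set \<Rightarrow> ('h \<Rightarrow> 'h) \<Rightarrow> ('h \<Rightarrow> 'h) \<Rightarrow> bool" where
  "ideal_triangulation H nxt glue \<longleftrightarrow>
     finite H \<and> nxt ` H \<subseteq> H \<and> glue ` H \<subseteq> H \<and>
     (\<forall>h\<in>H. nxt h \<noteq> h \<and> nxt (nxt (nxt h)) = h \<and> glue h \<noteq> h \<and> glue (glue h) = h) \<and>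
     (\<forall>h\<in>H. \<forall>h'\<in>H. (h, h') \<in> ({(x, nxt x) | x. x \<in> H} \<union> {(x, glue x) | x. x \<in> H})\<^sup>*)"

definition side_edge :: "('h \<Rightarrow> 'h) \<Rightarrow> 'h \<Rightarrow> 'h set" where
  "side_edge glue h = {h, glue h}"

definition side_tri :: "('h \<Rightarrow> 'h) \<Rightarrow> 'h \<Rightarrow> 'h set" where
  "side_tri nxt h = {h, nxt h, nxt (nxt h)}"

definition tri_edges :: "'h set \<Rightarrow> ('h \<Rightarrow> 'h) \<Rightarrow> 'h set set" where
  "tri_edges H glue = side_edge glue ` H"

definition triangles :: "'h set \<Rightarrow> ('h \<Rightarrow> 'h) \<Rightarrow> 'h set set" where
  "triangles H nxt = side_tri nxt ` H"

text \<open>Euler characteristic of the punctured surface S (ideal vertices removed): |F| - |E|.\<close>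
definition euler_char :: "'h set \<Rightarrow> ('h \<Rightarrow> 'h) \<Rightarrow> ('h \<Rightarrow> 'h) \<Rightarrow> int" where
  "euler_char H nxt glue = int (card (triangles H nxt)) - int (card (tri_edges H glue))"

text \<open>Generalized angle at the corner opposite side h, for edge lengths l \<in> R^E.
 With l_i the length of side h and l_j, l_k those of the other two sides, the relations
 e^{l_i}/2 = 2/(theta_j theta_k) (and cyclic) have the unique positive solution
 theta_i = 2 exp((l_i - l_j - l_k)/2).\<close>
definition gangle :: "('h \<Rightarrow> 'h) \<Rightarrow> ('h \<Rightarrow> 'h) \<Rightarrow> ('h set \<Rightarrow> real) \<Rightarrow> 'h \<Rightarrow> real" where
  "gangle nxt glue l h =
     2 * exp ((l (side_edge glue h) - l (side_edge glue (nxt h)) - l (side_edge glue (nxt (nxt h)))) / 2)"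

lemma gangle_relation:
  "exp (l (side_edge glue h)) / 2 =
     2 / (gangle nxt glue l (nxt h) * gangle nxt glue l (nxt (nxt h)))"
  if "nxt (nxt (nxt h)) = h"
  using that unfolding gangle_def
  by (simp add: exp_add[symmetric] exp_diff[symmetric] field_simps exp_minus)

definition radius_inv :: "('h \<Rightarrow> 'h) \<Rightarrow> ('h \<Rightarrow> 'h) \<Rightarrow> ('h set \<Rightarrow> real) \<Rightarrow> 'h \<Rightarrow> real" where
  "radius_inv nxt glue l h =
     (gangle nxt glue l (nxt h) + gangle nxt glue l (nxt (nxt h)) - gangle nxt glue l h) / 2"

definition Psi :: "('h \<Rightarrow> 'h) \<Rightarrow> ('h \<Rightarrow> 'h) \<Rightarrow> ('h set \<Rightarrow> real) \<Rightarrow> 'h set \<Rightarrow> real" where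
  "Psi nxt glue l e = (\<Sum>h\<in>e. radius_inv nxt glue l h)"

definition edge_cycle :: "'h set \<Rightarrow> ('h \<Rightarrow> 'h) \<Rightarrow> ('h \<Rightarrow> 'h) \<Rightarrow> 'h set list \<Rightarrow> 'h set list \<Rightarrow> bool" where
  "edge_cycle H nxt glue es ts \<longleftrightarrow>
     length es = length ts \<and> length es \<ge> 1 \<and>
     set es \<subseteq> tri_edges H glue \<and> set ts \<subseteq> triangles H nxt \<and>
     (\<forall>i < length es.
        es ! i \<in> side_edge glue ` (ts ! i) \<and>
        es ! ((i + 1) mod length es) \<in> side_edge glue ` (ts ! i) \<and>
        es ! i \<noteq> es ! ((i + 1) mod length es))"

definition PT :: "'h set \<Rightarrow> ('h \<Rightarrow> 'h) \<Rightarrow> ('h \<Rightarrow> 'h) \<Rightarrow> ('h set \<Rightarrow> real) set" where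
  "PT H nxt glue = {z. \<forall>es ts. edge_cycle H nxt glue es ts \<longrightarrow> (\<Sum>i<length es. z (es ! i)) > 0}"

end

theory Submission
  imports Defs
begin

lemma sum_edges:
  assumes T: "ideal_triangulation H nxt glue"
  shows "(\<Sum>e\<in>tri_edges H glue. \<Sum>h\<in>e. f h) = (\<Sum>h\<in>H. f h)"
proof -
  have fin: "finite H" and gH: "glue ` H \<subseteq> H"
    and inv: "\<forall>h\<in>H. glue h \<noteq> h \<and> glue (glue h) = h"
    using T unfolding ideal_triangulation_def by auto
  have U: "\<Union>(tri_edges H glue) = H"
    using gH unfolding tri_edges_def side_edge_def by auto
  have "finite (tri_edges H glue)" using fin unfolding tri_edges_def by simp
  moreover have "\<forall>A\<in>tri_edges H glue. finite A" unfolding tri_edges_def side_edge_def by auto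
  moreover have "\<forall>A\<in>tri_edges H glue. \<forall>B\<in>tri_edges H glue. A \<noteq> B \<longrightarrow> A \<inter> B = {}"
  proof (intro ballI impI)
    fix A B assume A: "A \<in> tri_edges H glue" and B: "B \<in> tri_edges H glue" and "A \<noteq> B"
    then obtain a b where a: "a \<in> H" "A = {a, glue a}" and b: "b \<in> H" "B = {b, glue b}"
      unfolding tri_edges_def side_edge_def by auto
    show "A \<inter> B = {}"
    proof (rule ccontr)
      assume "A \<inter> B \<noteq> {}"
      then obtain x where "x \<in> A" "x \<in> B" by auto
      have ga: "glue (glue a) = a" using inv a(1) by blast
      have gb: "glue (glue b) = b" using inv b(1) by blast
      have xa: "x = a \<or> x = glue a" using \<open>x \<in> A\<close> a(2) by blast
      have xb: "x = b \<or> x = glue b" using \<open>x \<in> B\<close> b(2) by blast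
      have "b = a \<or> b = glue a" using xa xb ga gb by metis
      then have "A = B" unfolding a(2) b(2)
      proof
        assume "b = a" then show "{a, glue a} = {b, glue b}" by simp
      next
        assume "b = glue a" then show "{a, glue a} = {b, glue b}" using ga by auto
      qed
      with \<open>A \<noteq> B\<close> show False by simp
    qed
  qed
  ultimately have "sum f (\<Union>(tri_edges H glue)) = sum (sum f) (tri_edges H glue)"
    using sum.Union_disjoint[of "tri_edges H glue" f] by simp
  with U show ?thesis by simp
qed

lemma sum_nxt:
  assumes T: "ideal_triangulation H nxt glue"
  shows "(\<Sum>h\<in>H. f (nxt h)) = (\<Sum>h\<in>H. f h)"
proof -
  have nH: "nxt ` H \<subseteq> H" and c: "\<forall>h\<in>H. nxt (nxt (nxt h)) = h"
    using T unfolding ideal_triangulation_def by auto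
  have inj: "inj_on nxt H"
  proof (rule inj_onI)
    fix a b assume "a \<in> H" "b \<in> H" "nxt a = nxt b"
    then have "nxt (nxt (nxt a)) = nxt (nxt (nxt b))" by simp
    with c \<open>a \<in> H\<close> \<open>b \<in> H\<close> show "a = b" by simp
  qed
  have im: "nxt ` H = H"
  proof
    show "nxt ` H \<subseteq> H" by fact
    show "H \<subseteq> nxt ` H"
    proof
      fix h assume h: "h \<in> H"
      have "nxt (nxt h) \<in> H" using h nH by auto
      moreover have "h = nxt (nxt (nxt h))" using c h by simp
      ultimately show "h \<in> nxt ` H" by blast
    qed
  qed
  have "(\<Sum>h\<in>H. f (nxt h)) = sum f (nxt ` H)" using sum.reindex[OF inj, of f] by simp
  with im show ?thesis by simp
qed

lemma total_angle:
  assumes T: "ideal_triangulation H nxt glue"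
  shows "(\<Sum>h\<in>H. gangle nxt glue l h) = 2 * (\<Sum>e\<in>tri_edges H glue. Psi nxt glue l e)"
proof -
  let ?g = "gangle nxt glue l"
  have "(\<Sum>e\<in>tri_edges H glue. Psi nxt glue l e) = (\<Sum>h\<in>H. radius_inv nxt glue l h)"
    unfolding Psi_def using sum_edges[OF T] by simp
  also have "\<dots> = ((\<Sum>h\<in>H. ?g (nxt h)) + (\<Sum>h\<in>H. ?g (nxt (nxt h))) - (\<Sum>h\<in>H. ?g h)) / 2"
    unfolding radius_inv_def sum_divide_distrib[symmetric] by (simp add: sum.distrib sum_subtractf)
  also have "\<dots> = (\<Sum>h\<in>H. ?g h) / 2"
    using sum_nxt[OF T, of ?g] sum_nxt[OF T, of "\<lambda>h. ?g (nxt h)"] by simp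
  finally show ?thesis by simp
qed

theorem lemma2p4:
  fixes H :: "'h set" and nxt glue :: "'h \<Rightarrow> 'h"
    and l :: "nat \<Rightarrow> 'h set \<Rightarrow> real" and z :: "'h set \<Rightarrow> real"
  assumes "ideal_triangulation H nxt glue"
    and "euler_char H nxt glue < 0"
    and "z \<in> PT H nxt glue"
    and "\<forall>e\<in>tri_edges H glue. (\<lambda>m. Psi nxt glue (l m) e) \<longlonglongrightarrow> z e"
  shows "\<forall>h\<in>H. (\<exists>B. \<forall>m. \<bar>gangle nxt glue (l m) h\<bar> \<le> B) \<and>
           (\<forall>L::ereal. (\<lambda>m. ereal (gangle nxt glue (l m) h)) \<longlonglongrightarrow> L \<longrightarrow> L \<noteq> \<infinity>)"
proof
  fix h assume h: "h \<in> H"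
  have fin: "finite H" using assms(1) unfolding ideal_triangulation_def by auto
  let ?S = "\<lambda>m. 2 * (\<Sum>e\<in>tri_edges H glue. Psi nxt glue (l m) e)"
  have "?S \<longlonglongrightarrow> 2 * (\<Sum>e\<in>tri_edges H glue. z e)"
    using assms(4) by (intro tendsto_mult tendsto_const tendsto_sum) auto
  then have "bounded (range ?S)" by (rule convergent_imp_bounded)
  then obtain B where B: "\<And>m. \<bar>?S m\<bar> \<le> B" unfolding bounded_iff by auto
  have pos: "\<And>m k. gangle nxt glue (l m) k > 0" unfolding gangle_def by simp
  have bd: "\<bar>gangle nxt glue (l m) h\<bar> \<le> B" for m
  proof -
    have "gangle nxt glue (l m) h \<le> (\<Sum>k\<in>H. gangle nxt glue (l m) k)"
      using fin h pos by (intro member_le_sum) (auto intro: less_imp_le)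
    also have "\<dots> = ?S m" by (rule total_angle[OF assms(1)])
    finally show ?thesis using B[of m] pos[of m h] by simp
  qed
  show "(\<exists>B. \<forall>m. \<bar>gangle nxt glue (l m) h\<bar> \<le> B) \<and>
           (\<forall>L::ereal. (\<lambda>m. ereal (gangle nxt glue (l m) h)) \<longlonglongrightarrow> L \<longrightarrow> L \<noteq> \<infinity>)"
  proof (intro conjI allI impI)
    show "\<exists>B. \<forall>m. \<bar>gangle nxt glue (l m) h\<bar> \<le> B" using bd by blast
  next
    fix L :: ereal assume lim: "(\<lambda>m. ereal (gangle nxt glue (l m) h)) \<longlonglongrightarrow> L"
    show "L \<noteq> \<infinity>"
    proof
      assume "L = \<infinity>"
      with lim have "\<forall>\<^sub>F m in sequentially. ereal (gangle nxt glue (l m) h) > ereal B"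
        by (simp add: tendsto_PInfty)
      then obtain m where "ereal (gangle nxt glue (l m) h) > ereal B"
        by (auto simp: eventually_sequentially)
      with bd[of m] show False by simp
    qed
  qed
qed

end
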